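(* Consider equation (E). Assume that for every $i=1,\dots,m$, $$\liminf_{t\to+\infty}\int_{\tau_i(t)}^{t}p_i(s)\,ds=\beta_i\in\Big(0,\frac1e\Big],$$ and let $\lambda_i^{*}$ be the smallest real root of $e^{\beta_i\lambda}=\lambda$. Assume there exist continuous non-decreasing functions $\sigma_1,\dots,\sigma_m:[t_0,\infty)\to\mathbb{R}$ with $\tau_i(t)\le\sigma_i(t)\le t$ for $t\ge t_0$, $i=1,\dots,m$, such that $$\limsup_{\varepsilon\to0+}\Bigg(\limsup_{t\to+\infty}\prod_{j=1}^{m}\bigg(\prod_{i=1}^{m}\int_{\sigma_j(t)}^{t}p_i(s)\exp\Big(\int_{\tau_i(s)}^{\sigma_i(t)}\sum_{k=1}^{m}(\lambda_k^{*}-\varepsilon)\,p_k(\xi)\,d\xi\Big)ds\bigg)^{1/m}\Bigg)>\frac{1}{m^{m}}.$$ Then all solutions of (E) oscillate.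
   Context: Equation (E) is $x'(t)+\sum_{i=1}^{m}p_i(t)\,x(\tau_i(t))=0$, $t\ge t_0$, where $m\ge1$ is an integer and, for each $i$, $p_i,\tau_i:[t_0,\infty)\to[0,\infty)$ are continuous, $\tau_i(t)\le t$ for $t\ge t_0$, and $\lim_{t\to\infty}\tau_i(t)=\infty$. Let $\tau(t)=\min_i\tau_i(t)$ and $\tau_{(-1)}(t)=\sup\{s:\tau(s)\le t\}$. A solution of (E) is a function $x\in C([T_0,\infty);\mathbb{R})$ for some $T_0\ge t_0$ which is continuously differentiable on $[\tau_{(-1)}(T_0),\infty)$ and satisfies (E) for $t\ge\tau_{(-1)}(T_0)$. A solution is oscillatory if it has arbitrarily large zeros; "all solutions oscillate" means every solution is oscillatory. *)

theory Defs
  imports "HOL-Analysis.Analysis"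
begin

definition oint :: "real \<Rightarrow> real \<Rightarrow> (real \<Rightarrow> real) \<Rightarrow> real" where
  "oint a b f = (if a \<le> b then integral {a..b} f else - integral {b..a} f)"

definition tau_min :: "nat \<Rightarrow> (nat \<Rightarrow> real \<Rightarrow> real) \<Rightarrow> real \<Rightarrow> real" where
  "tau_min m \<tau> t = Min ((\<lambda>i. \<tau> i t) ` {1..m})"

definition tau_inv :: "nat \<Rightarrow> (nat \<Rightarrow> real \<Rightarrow> real) \<Rightarrow> real \<Rightarrow> real \<Rightarrow> real" where
  "tau_inv m \<tau> t0 t = Sup {s. t0 \<le> s \<and> tau_min m \<tau> s \<le> t}"

definition is_solution ::
  "nat \<Rightarrow> (nat \<Rightarrow> real \<Rightarrow> real) \<Rightarrow> (nat \<Rightarrow> real \<Rightarrow> real) \<Rightarrow> real \<Rightarrow> real \<Rightarrow> (real \<Rightarrow> real) \<Rightarrow> bool" where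
  "is_solution m p \<tau> t0 T0 x \<longleftrightarrow>
     t0 \<le> T0 \<and> continuous_on {T0..} x \<and>
     (\<exists>x'. continuous_on {tau_inv m \<tau> t0 T0..} x' \<and>
        (\<forall>t \<in> {tau_inv m \<tau> t0 T0..}.
            (x has_real_derivative x' t) (at t within {tau_inv m \<tau> t0 T0..}) \<and>
            x' t + (\<Sum>i=1..m. p i t * x (\<tau> i t)) = 0))"

definition oscillatory :: "(real \<Rightarrow> real) \<Rightarrow> bool" where
  "oscillatory x \<longleftrightarrow> (\<forall>T. \<exists>t\<ge>T. x t = 0)"

end

theory Submission
  imports Defs
begin

lemma gronwall_down:
  fixes x x' g :: "real \<Rightarrow> real"
  assumes ab: "a \<le> b"
    and der: "\<And>t. t \<in> {a..b} \<Longrightarrow> (x has_real_derivative x' t) (at t within {a..b})"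
    and gc: "continuous_on {a..b} g"
    and ineq: "\<And>t. t \<in> {a..b} \<Longrightarrow> x' t \<le> - g t * x t"
  shows "x b * exp (integral {a..b} g) \<le> x a"
proof -
  define h where "h t = x t * exp (integral {a..t} g)" for t
  define h' where "h' t = (x' t + g t * x t) * exp (integral {a..t} g)" for t
  have hd: "(h has_vector_derivative h' t) (at t within {a..b})" if t: "t \<in> {a..b}" for t
  proof -
    have d1: "((\<lambda>u. integral {a..u} g) has_real_derivative g t) (at t within {a..b})"
      using integral_has_real_derivative[OF gc t] .
    have d2: "((\<lambda>u. exp (integral {a..u} g)) has_real_derivative exp (integral {a..t} g) * g t) (at t within {a..b})"
      by (rule DERIV_chain2[OF DERIV_exp d1])
    have "(h has_real_derivative (x' t * exp (integral {a..t} g) + (exp (integral {a..t} g) * g t) * x t)) (at t within {a..b})"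
      unfolding h_def by (rule DERIV_mult[OF der[OF t] d2])
    moreover have "x' t * exp (integral {a..t} g) + (exp (integral {a..t} g) * g t) * x t = h' t"
      by (simp add: h'_def algebra_simps)
    ultimately show ?thesis by (simp add: has_real_derivative_iff_has_vector_derivative)
  qed
  have I: "(h' has_integral (h b - h a)) {a..b}"
    by (rule fundamental_theorem_of_calculus[OF ab hd])
  have "h b - h a \<le> 0"
  proof (rule has_integral_le[OF I has_integral_0])
    fix t assume t: "t \<in> {a..b}"
    have "x' t + g t * x t \<le> 0" using ineq[OF t] by simp
    then show "h' t \<le> 0" unfolding h'_def by (simp add: mult_nonpos_nonneg)
  qed
  then show ?thesis by (simp add: h_def)
qed


context
  fixes m :: nat and t0 :: real
    and p \<tau> \<sigma> :: "nat \<Rightarrow> real \<Rightarrow> real"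
    and \<beta> lam :: "nat \<Rightarrow> real"
  assumes m: "m \<ge> 1"
    and p_cont: "\<forall>i\<in>{1..m}. continuous_on {t0..} (p i)"
    and p_nonneg: "\<forall>i\<in>{1..m}. \<forall>t\<ge>t0. p i t \<ge> 0"
    and tau_cont: "\<forall>i\<in>{1..m}. continuous_on {t0..} (\<tau> i)"
    and tau_nonneg: "\<forall>i\<in>{1..m}. \<forall>t\<ge>t0. \<tau> i t \<ge> 0"
    and tau_le: "\<forall>i\<in>{1..m}. \<forall>t\<ge>t0. \<tau> i t \<le> t"
    and tau_lim: "\<forall>i\<in>{1..m}. filterlim (\<tau> i) at_top at_top"
    and beta: "\<forall>i\<in>{1..m}.
        Liminf at_top (\<lambda>t. ereal (integral {\<tau> i t..t} (p i))) = ereal (\<beta> i)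
        \<and> 0 < \<beta> i \<and> \<beta> i \<le> 1 / exp 1"
    and lam_root: "\<forall>i\<in>{1..m}. exp (\<beta> i * lam i) = lam i"
    and lam_least: "\<forall>i\<in>{1..m}. \<forall>y. exp (\<beta> i * y) = y \<longrightarrow> lam i \<le> y"
    and sigma_cont: "\<forall>i\<in>{1..m}. continuous_on {t0..} (\<sigma> i)"
    and sigma_mono: "\<forall>i\<in>{1..m}. mono_on {t0..} (\<sigma> i)"
    and sigma_bounds: "\<forall>i\<in>{1..m}. \<forall>t\<ge>t0. \<tau> i t \<le> \<sigma> i t \<and> \<sigma> i t \<le> t"
    and cond: "Limsup (at_right 0) (\<lambda>\<epsilon>::real.
        Limsup at_top (\<lambda>t. ereal
          (\<Prod>j=1..m. (\<Prod>i=1..m.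
              integral {\<sigma> j t..t} (\<lambda>s. p i s *
                exp (oint (\<tau> i s) (\<sigma> i t)
                       (\<lambda>\<xi>. \<Sum>k=1..m. (lam k - \<epsilon>) * p k \<xi>))))
            powr (1 / real m))))
        > ereal (1 / real m ^ m)"
begin

lemma ev_tau: "\<exists>N. \<forall>t\<ge>N. \<forall>i\<in>{1..m}. \<tau> i t \<ge> Z"
proof -
  have "eventually (\<lambda>t. \<forall>i\<in>{1..m}. Z \<le> \<tau> i t) at_top"
    using tau_lim by (auto simp: filterlim_at_top intro!: eventually_ball_finite)
  then show ?thesis by (auto simp: eventually_at_top_linorder)
qed

lemma core:
  fixes x x' :: "real \<Rightarrow> real" and Tz T1 :: real
  assumes der: "\<forall>t\<in>{Tz..}. (x has_real_derivative x' t) (at t within {Tz..}) \<and> x' t + (\<Sum>i=1..m. p i t * x (\<tau> i t)) = 0"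
    and pos: "\<forall>t\<ge>T1. x t > 0"
  shows False
proof -
  obtain N1 where N1: "\<forall>t\<ge>N1. \<forall>i\<in>{1..m}. \<tau> i t \<ge> T1" using ev_tau by blast
  define T2 where "T2 = max (max N1 T1) (max Tz t0)"
  have T2: "T2 \<ge> T1" "T2 \<ge> Tz" "T2 \<ge> t0" "\<forall>t\<ge>T2. \<forall>i\<in>{1..m}. \<tau> i t \<ge> T1"
    using N1 unfolding T2_def by auto
  have xtaupos: "x (\<tau> i t) > 0" if "t \<ge> T2" "i \<in> {1..m}" for t i
    using T2(4) pos that by auto
  have xpos: "x t > 0" if "t \<ge> T2" for t using pos T2 that by auto
  have deriv2: "(x has_real_derivative x' t) (at t within {a..b})" if "T2 \<le> a" "t \<in> {a..b}" for a b t
  proof -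
    have "(x has_real_derivative x' t) (at t within {Tz..})" using der that T2 by auto
    then show ?thesis by (rule DERIV_subset) (use that T2 in auto)
  qed
  have eqn: "x' t = - (\<Sum>i=1..m. p i t * x (\<tau> i t))" if "t \<ge> T2" for t
  proof -
    have "x' t + (\<Sum>i=1..m. p i t * x (\<tau> i t)) = 0" using der that T2 by auto
    then show ?thesis by linarith
  qed
  have termnn: "p i t * x (\<tau> i t) \<ge> 0" if "t \<ge> T2" "i \<in> {1..m}" for t i
    using p_nonneg xtaupos[OF that] that T2 by (simp add: less_imp_le)
  have mono: "x b \<le> x a" if "T2 \<le> a" "a \<le> b" for a b
  proof -
    have "x b * exp (integral {a..b} (\<lambda>_. 0)) \<le> x a"
    proof (rule gronwall_down[OF that(2)])
      show "\<And>t. t \<in> {a..b} \<Longrightarrow> (x has_real_derivative x' t) (at t within {a..b})"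
        using deriv2 that by auto
      show "continuous_on {a..b} (\<lambda>_. 0::real)" by simp
      fix t assume t: "t \<in> {a..b}"
      then have "t \<ge> T2" using that by auto
      then have "0 \<le> (\<Sum>i=1..m. p i t * x (\<tau> i t))" using termnn by (intro sum_nonneg) auto
      then show "x' t \<le> - 0 * x t" using eqn[OF \<open>t \<ge> T2\<close>] by simp
    qed
    then show ?thesis by simp
  qed
  obtain N3 where N3: "\<forall>t\<ge>N3. \<forall>i\<in>{1..m}. \<tau> i t \<ge> T2" using ev_tau by blast
  define T3 where "T3 = max N3 T2"
  have T3: "T3 \<ge> T2" "\<forall>t\<ge>T3. \<forall>i\<in>{1..m}. \<tau> i t \<ge> T2" using N3 unfolding T3_def by auto
  have pc: "continuous_on {a..b} (p i)" if "a \<ge> t0" "i \<in> {1..m}" for a b i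
  proof -
    have "continuous_on {t0..} (p i)" using p_cont that by auto
    then show ?thesis by (rule continuous_on_subset) (use that in auto)
  qed

  have ratio: "eventually (\<lambda>t. (lam i - \<epsilon>) * x t < x (\<tau> i t)) at_top"
    if i: "i \<in> {1..m}" and \<epsilon>: "\<epsilon> > 0" for i \<epsilon>
  proof -
    define w where "w t = x (\<tau> i t) / x t" for t
    define L where "L = Liminf at_top (\<lambda>t. ereal (w t))"
    have w1: "w t \<ge> 1" if "t \<ge> T3" for t
    proof -
      have "\<tau> i t \<ge> T2" using T3 that i by auto
      moreover have "\<tau> i t \<le> t" using tau_le i that T3 T2 by auto
      ultimately have "x t \<le> x (\<tau> i t)" using mono by auto
      then show ?thesis using xpos[of t] that T3 by (simp add: w_def)
    qed
    have L1: "ereal 1 \<le> L" unfolding L_def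
      by (rule Liminf_bounded) (use w1 in \<open>auto simp: eventually_at_top_linorder\<close>)
    have bi: "0 < \<beta> i" and Lb: "Liminf at_top (\<lambda>t. ereal (integral {\<tau> i t..t} (p i))) = ereal (\<beta> i)"
      using beta i by auto
    have key: "ereal (lam i) \<le> L"
    proof (rule ccontr)
      assume "\<not> ?thesis"
      then have Llt: "L < ereal (lam i)" by simp
      then obtain l where Ll: "L = ereal l" using L1 by (cases L) auto
      have l1: "1 \<le> l" "l < lam i" using L1 Llt Ll by auto
      have bound: "exp ((l - \<delta>) * (\<beta> i - \<delta>)) \<le> l" if \<delta>: "0 < \<delta>" "\<delta> < l" "\<delta> < \<beta> i" for \<delta>
      proof -
        have "eventually (\<lambda>t. ereal (l - \<delta>) < ereal (w t)) at_top"
          using less_LiminfD[of "ereal (l-\<delta>)" at_top "\<lambda>t. ereal (w t)"] \<delta> Ll L_def by auto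
        then obtain S where S: "\<forall>t\<ge>S. l - \<delta> < w t" by (auto simp: eventually_at_top_linorder)
        have "eventually (\<lambda>t. ereal (\<beta> i - \<delta>) < ereal (integral {\<tau> i t..t} (p i))) at_top"
          using less_LiminfD[of "ereal (\<beta> i - \<delta>)" at_top "\<lambda>t. ereal (integral {\<tau> i t..t} (p i))"] Lb \<delta> by auto
        then obtain S2 where S2: "\<forall>t\<ge>S2. \<beta> i - \<delta> < integral {\<tau> i t..t} (p i)"
          by (auto simp: eventually_at_top_linorder)
        obtain N where N: "\<forall>t\<ge>N. \<forall>k\<in>{1..m}. \<tau> k t \<ge> max S T2" using ev_tau by blast
        have "\<forall>t \<ge> max N (max S2 T3). exp ((l-\<delta>)*(\<beta> i - \<delta>)) \<le> w t"
        proof (intro allI impI)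
          fix t assume t: "max N (max S2 T3) \<le> t"
          define a where "a = \<tau> i t"
          have a: "a \<ge> S" "a \<ge> T2" "a \<le> t" using N t i tau_le T2(3) T3 unfolding a_def by auto
          have G: "x t * exp (integral {a..t} (\<lambda>\<xi>. (l-\<delta>) * p i \<xi>)) \<le> x a"
          proof (rule gronwall_down)
            show "a \<le> t" by (rule a(3))
            show "\<And>\<xi>. \<xi>\<in>{a..t} \<Longrightarrow> (x has_real_derivative x' \<xi>) (at \<xi> within {a..t})"
              using deriv2 a by auto
            show "continuous_on {a..t} (\<lambda>\<xi>. (l-\<delta>)*p i \<xi>)"
              using pc[of a i t] a T2 i by (auto intro!: continuous_intros)
            fix \<xi> assume \<xi>: "\<xi> \<in> {a..t}"
            have \<xi>2: "\<xi> \<ge> T2" "\<xi> \<ge> S" using \<xi> a by auto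
            have "p i \<xi> * x (\<tau> i \<xi>) \<le> (\<Sum>k=1..m. p k \<xi> * x (\<tau> k \<xi>))"
              by (rule member_le_sum) (use i termnn[OF \<xi>2(1)] in auto)
            moreover have "(l-\<delta>) * x \<xi> < x (\<tau> i \<xi>)"
            proof -
              have "l - \<delta> < x (\<tau> i \<xi>) / x \<xi>" using S \<xi>2 by (simp add: w_def)
              then show ?thesis using xpos[OF \<xi>2(1)] by (simp add: pos_less_divide_eq)
            qed
            moreover have "p i \<xi> \<ge> 0" using p_nonneg i \<xi>2 T2 by auto
            ultimately have "p i \<xi> * ((l-\<delta>) * x \<xi>) \<le> (\<Sum>k=1..m. p k \<xi> * x (\<tau> k \<xi>))"
              by (smt (verit) mult_left_mono)
            then show "x' \<xi> \<le> - ((l-\<delta>)*p i \<xi>) * x \<xi>"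
              using eqn[OF \<xi>2(1)] by (simp add: algebra_simps)
          qed
          have "integral {a..t} (\<lambda>\<xi>. (l-\<delta>) * p i \<xi>) = (l-\<delta>) * integral {a..t} (p i)"
            by simp
          moreover have "(l-\<delta>)*(\<beta> i - \<delta>) \<le> (l-\<delta>) * integral {a..t} (p i)"
            using S2 t \<delta> unfolding a_def by (intro mult_left_mono) auto
          ultimately have "exp ((l-\<delta>)*(\<beta> i - \<delta>)) * x t \<le> x a"
            using G xpos[of t] T3 t by (smt (verit) exp_le_cancel_iff mult_left_mono mult.commute)
          then show "exp ((l-\<delta>)*(\<beta> i - \<delta>)) \<le> w t"
            using xpos[of t] T3 t by (simp add: w_def a_def pos_le_divide_eq)
        qed
        then have "eventually (\<lambda>t. exp ((l-\<delta>)*(\<beta> i - \<delta>)) \<le> w t) at_top"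
          unfolding eventually_at_top_linorder by blast
        then have "ereal (exp ((l-\<delta>)*(\<beta> i - \<delta>))) \<le> L" unfolding L_def
          by (intro Liminf_bounded) (auto elim: eventually_mono)
        then show ?thesis using Ll by simp
      qed
      have lim: "exp (l * \<beta> i) \<le> l"
      proof (rule tendsto_le[of "at_right 0" "\<lambda>_. l" l "\<lambda>\<delta>. exp ((l-\<delta>)*(\<beta> i-\<delta>))"])
        show "at_right (0::real) \<noteq> bot" by simp
        show "((\<lambda>_. l) \<longlongrightarrow> l) (at_right 0)" by simp
        have "((\<lambda>\<delta>. exp ((l-\<delta>)*(\<beta> i-\<delta>))) \<longlongrightarrow> exp ((l-0)*(\<beta> i-0))) (at_right 0)"
          by (intro tendsto_intros)
        then show "((\<lambda>\<delta>. exp ((l-\<delta>)*(\<beta> i-\<delta>))) \<longlongrightarrow> exp (l*\<beta> i)) (at_right 0)" by simp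
        show "eventually (\<lambda>\<delta>. exp ((l-\<delta>)*(\<beta> i-\<delta>)) \<le> l) (at_right 0)"
          unfolding eventually_at_right_field
          by (rule exI[of _ "min l (\<beta> i)"]) (use l1 bi bound in auto)
      qed
      have "\<exists>y. 0 \<le> y \<and> y \<le> l \<and> exp (\<beta> i * y) - y = 0"
        by (rule IVT2[of "\<lambda>y. exp (\<beta> i * y) - y" l 0 0])
           (use lim l1 in \<open>auto simp: mult.commute intro!: continuous_intros\<close>)
      then obtain y where "y \<le> l" "exp (\<beta> i * y) = y" by auto
      then show False using lam_least i l1 by force
    qed
    moreover have "ereal (lam i - \<epsilon>) < ereal (lam i)" using \<epsilon> by simp
    ultimately have "ereal (lam i - \<epsilon>) < L" by (rule order.strict_trans2[rotated])
    then have "eventually (\<lambda>t. ereal (lam i - \<epsilon>) < ereal (w t)) at_top"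
      unfolding L_def by (rule less_LiminfD)
    moreover have "eventually (\<lambda>t. t \<ge> T2) at_top" by simp
    ultimately show ?thesis
    proof eventually_elim
      case (elim t)
      then show ?case using xpos[of t] by (simp add: w_def pos_less_divide_eq)
    qed
  qed

  have Gbound: "Limsup at_top (\<lambda>t. ereal
          (\<Prod>j=1..m. (\<Prod>i=1..m.
              integral {\<sigma> j t..t} (\<lambda>s. p i s *
                exp (oint (\<tau> i s) (\<sigma> i t)
                       (\<lambda>\<xi>. \<Sum>k=1..m. (lam k - \<epsilon>) * p k \<xi>))))
            powr (1 / real m))) \<le> ereal (1 / real m ^ m)" if \<epsilon>: "\<epsilon> > 0" for \<epsilon>
  proof -
    define g where "g = (\<lambda>\<xi>. \<Sum>k=1..m. (lam k - \<epsilon>) * p k \<xi>)"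
    have gc: "continuous_on {a..b} g" if "a \<ge> t0" for a b
      unfolding g_def using pc that by (auto intro!: continuous_on_sum continuous_on_mult_left)
    have "eventually (\<lambda>t. \<forall>k\<in>{1..m}. (lam k - \<epsilon>) * x t < x (\<tau> k t)) at_top"
      using ratio \<epsilon> by (intro eventually_ball_finite) auto
    then obtain N4 where N4: "\<forall>t\<ge>N4. \<forall>k\<in>{1..m}. (lam k - \<epsilon>) * x t < x (\<tau> k t)"
      by (auto simp: eventually_at_top_linorder)
    define T4 where "T4 = max N4 T3"
    have T4: "T4 \<ge> T3" "T4 \<ge> N4" unfolding T4_def by auto
    have gron: "x b * exp (integral {a..b} g) \<le> x a" if "T4 \<le> a" "a \<le> b" for a b
    proof (rule gronwall_down[OF that(2)])
      show "\<And>\<xi>. \<xi>\<in>{a..b} \<Longrightarrow> (x has_real_derivative x' \<xi>) (at \<xi> within {a..b})"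
        using deriv2[of a] that T4 T3 by auto
      show "continuous_on {a..b} g" using gc that T4 T3 T2 by auto
      fix \<xi> assume \<xi>: "\<xi> \<in> {a..b}"
      have \<xi>2: "\<xi> \<ge> T2" "\<xi> \<ge> N4" "\<xi> \<ge> t0" using \<xi> that T4 T3 T2 by auto
      have "(\<Sum>k=1..m. (lam k - \<epsilon>) * p k \<xi> * x \<xi>) \<le> (\<Sum>k=1..m. p k \<xi> * x (\<tau> k \<xi>))"
      proof (rule sum_mono)
        fix k assume k: "k \<in> {1..m}"
        have "p k \<xi> \<ge> 0" using p_nonneg k \<xi>2 by auto
        moreover have "(lam k - \<epsilon>) * x \<xi> \<le> x (\<tau> k \<xi>)" using N4 k \<xi>2 by (auto intro: less_imp_le)
        ultimately have "p k \<xi> * ((lam k - \<epsilon>) * x \<xi>) \<le> p k \<xi> * x (\<tau> k \<xi>)"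
          by (rule mult_left_mono[rotated])
        then show "(lam k - \<epsilon>) * p k \<xi> * x \<xi> \<le> p k \<xi> * x (\<tau> k \<xi>)"
          by (simp add: algebra_simps)
      qed
      moreover have "g \<xi> * x \<xi> = (\<Sum>k=1..m. (lam k - \<epsilon>) * p k \<xi> * x \<xi>)"
        unfolding g_def by (simp add: sum_distrib_right)
      ultimately show "x' \<xi> \<le> - g \<xi> * x \<xi>" using eqn[OF \<xi>2(1)] by simp
    qed
    obtain N5 where N5: "\<forall>t\<ge>N5. \<forall>i\<in>{1..m}. \<tau> i t \<ge> T4" using ev_tau by blast
    define T5 where "T5 = max N5 T4"
    obtain N6 where N6: "\<forall>t\<ge>N6. \<forall>i\<in>{1..m}. \<tau> i t \<ge> T5" using ev_tau by blast
    define T6 where "T6 = max N6 T5"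
    have T5: "T5 \<ge> T4" "\<forall>t\<ge>T5. \<forall>i\<in>{1..m}. \<tau> i t \<ge> T4" using N5 unfolding T5_def by auto
    have T6: "T6 \<ge> T5" "\<forall>t\<ge>T6. \<forall>i\<in>{1..m}. \<tau> i t \<ge> T5" using N6 unfolding T6_def by auto
    have chain: "T2 \<ge> t0" "T3 \<ge> T2" "T4 \<ge> T3" "T5 \<ge> T4" "T6 \<ge> T5" using T2 T3 T4 T5 T6 by auto
    have main: "(\<Prod>j=1..m. (\<Prod>i=1..m. integral {\<sigma> j t..t} (\<lambda>s. p i s * exp (oint (\<tau> i s) (\<sigma> i t) g))) powr (1 / real m)) \<le> 1 / real m ^ m"
      if t: "t \<ge> T6" for t
    proof -
      have tt0: "t \<ge> t0" using t chain by auto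
      have sj: "T5 \<le> \<sigma> j t" "\<sigma> j t \<le> t" if "j\<in>{1..m}" for j
      proof -
        have "\<tau> j t \<le> \<sigma> j t" "\<sigma> j t \<le> t" using sigma_bounds that tt0 by auto
        moreover have "T5 \<le> \<tau> j t" using T6 t that by auto
        ultimately show "T5 \<le> \<sigma> j t" "\<sigma> j t \<le> t" by auto
      qed
      define y where "y i = x (\<sigma> i t)" for i
      have ypos: "y i > 0" if "i\<in>{1..m}" for i
        using xpos sj[OF that] chain unfolding y_def by auto
      define f where "f i s = p i s * exp (oint (\<tau> i s) (\<sigma> i t) g)" for i s
      define A where "A i j = integral {\<sigma> j t..t} (f i)" for i j
      have sa: "s \<ge> T5" "\<tau> i s \<ge> T4" "\<tau> i s \<le> \<sigma> i t" "s \<ge> t0"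
        if "s \<in> {\<sigma> j t..t}" "i\<in>{1..m}" "j\<in>{1..m}" for s i j
      proof -
        show s5: "s \<ge> T5" using sj[OF that(3)] that by auto
        then show "\<tau> i s \<ge> T4" using T5 that by auto
        show st0: "s \<ge> t0" using s5 chain by auto
        have "\<tau> i s \<le> \<sigma> i s" using sigma_bounds that st0 by auto
        also have "\<sigma> i s \<le> \<sigma> i t"
        proof -
          have "mono_on {t0..} (\<sigma> i)" using sigma_mono that by auto
          then show ?thesis by (rule mono_onD) (use that st0 tt0 in auto)
        qed
        finally show "\<tau> i s \<le> \<sigma> i t" .
      qed
      have fnn: "f i s \<ge> 0" if "i\<in>{1..m}" "s \<ge> t0" for i s
        using p_nonneg that unfolding f_def by auto
      have fcont: "continuous_on {\<sigma> j t..t} (f i)" if ij: "i\<in>{1..m}" "j\<in>{1..m}" for i j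
      proof -
        have s_ge: "\<sigma> i t \<ge> T4" using sj[OF ij(1)] chain by auto
        have gi: "g integrable_on {T4..\<sigma> i t}"
          by (rule integrable_continuous_interval, rule gc) (use chain in auto)
        have eq: "oint (\<tau> i s) (\<sigma> i t) g = integral {T4..\<sigma> i t} g - integral {T4..\<tau> i s} g"
          if "s \<in> {\<sigma> j t..t}" for s
        proof -
          have "integral {T4..\<tau> i s} g + integral {\<tau> i s..\<sigma> i t} g = integral {T4..\<sigma> i t} g"
            using Henstock_Kurzweil_Integration.integral_combine[of T4 "\<tau> i s" "\<sigma> i t" g] sa[OF that ij] gi by auto
          then show ?thesis using sa[OF that ij] by (simp add: oint_def)
        qed
        have c1: "continuous_on {\<sigma> j t..t} (\<lambda>s. integral {T4..\<tau> i s} g)"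
        proof (rule continuous_on_compose2[OF indefinite_integral_continuous_1[OF gi]])
          have "continuous_on {t0..} (\<tau> i)" using tau_cont ij by auto
          then show "continuous_on {\<sigma> j t..t} (\<tau> i)"
            by (rule continuous_on_subset) (use sj[OF ij(2)] chain in auto)
          show "\<tau> i ` {\<sigma> j t..t} \<subseteq> {T4..\<sigma> i t}" using sa ij by auto
        qed
        have "continuous_on {\<sigma> j t..t} (\<lambda>s. p i s * exp (integral {T4..\<sigma> i t} g - integral {T4..\<tau> i s} g))"
          using c1 pc[of "\<sigma> j t" i t] sj[OF ij(2)] chain ij by (auto intro!: continuous_intros)
        moreover have "continuous_on {\<sigma> j t..t} (f i) = continuous_on {\<sigma> j t..t} (\<lambda>s. p i s * exp (integral {T4..\<sigma> i t} g - integral {T4..\<tau> i s} g))"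
          by (rule continuous_on_cong) (auto simp: f_def eq)
        ultimately show ?thesis by simp
      qed
      have Ann: "A i j \<ge> 0" if "i\<in>{1..m}" "j\<in>{1..m}" for i j
        unfolding A_def
        by (rule integral_nonneg[OF integrable_continuous_interval[OF fcont[OF that]]])
           (use fnn sa that in auto)
      have perj: "(\<Sum>i=1..m. y i * A i j) \<le> x (\<sigma> j t)" if j: "j\<in>{1..m}" for j
      proof -
        have hx: "(x' has_integral (x t - x (\<sigma> j t))) {\<sigma> j t..t}"
        proof (rule fundamental_theorem_of_calculus)
          show "\<sigma> j t \<le> t" using sj[OF j] by auto
          fix s assume "s \<in> {\<sigma> j t..t}"
          then show "(x has_vector_derivative x' s) (at s within {\<sigma> j t..t})"
            using deriv2[of "\<sigma> j t" s t] sj[OF j] chain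
            by (auto simp: has_real_derivative_iff_has_vector_derivative)
        qed
        then have "((\<lambda>s. - x' s) has_integral (x (\<sigma> j t) - x t)) {\<sigma> j t..t}"
          using has_integral_neg[OF hx] by simp
        moreover have "((\<lambda>s. - x' s) has_integral (x (\<sigma> j t) - x t)) {\<sigma> j t..t} =
             ((\<lambda>s. \<Sum>i=1..m. p i s * x (\<tau> i s)) has_integral (x (\<sigma> j t) - x t)) {\<sigma> j t..t}"
          by (rule has_integral_cong) (use eqn sj[OF j] chain in auto)
        ultimately have h1: "((\<lambda>s. \<Sum>i=1..m. p i s * x (\<tau> i s)) has_integral (x (\<sigma> j t) - x t)) {\<sigma> j t..t}"
          by simp
        have h2: "((\<lambda>s. \<Sum>i=1..m. y i * f i s) has_integral (\<Sum>i=1..m. y i * A i j)) {\<sigma> j t..t}"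
          by (rule has_integral_sum) (auto intro!: has_integral_mult_right integrable_integral
              integrable_continuous_interval fcont j simp: A_def)
        have "(\<Sum>i=1..m. y i * A i j) \<le> x (\<sigma> j t) - x t"
        proof (rule has_integral_le[OF h2 h1])
          fix s assume s: "s \<in> {\<sigma> j t..t}"
          show "(\<Sum>i=1..m. y i * f i s) \<le> (\<Sum>i=1..m. p i s * x (\<tau> i s))"
          proof (rule sum_mono)
            fix i assume i: "i \<in> {1..m}"
            have G: "x (\<sigma> i t) * exp (integral {\<tau> i s..\<sigma> i t} g) \<le> x (\<tau> i s)"
              by (rule gron) (use sa[OF s i j] in auto)
            have "p i s \<ge> 0" using p_nonneg sa[OF s i j] i by auto
            then have "p i s * (x (\<sigma> i t) * exp (integral {\<tau> i s..\<sigma> i t} g)) \<le> p i s * x (\<tau> i s)"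
              using G by (rule mult_left_mono[rotated])
            then show "y i * f i s \<le> p i s * x (\<tau> i s)"
              using sa[OF s i j] by (simp add: y_def f_def oint_def algebra_simps)
          qed
        qed
        then show ?thesis using xpos[of t] t chain by auto
      qed
      have amgm: "real m * (\<Prod>i=1..m. y i * A i j) powr (1 / real m) \<le> x (\<sigma> j t)" if j: "j\<in>{1..m}" for j
      proof -
        have "(\<Prod>i=1..m. y i * A i j) powr (1 / real m) \<le> (\<Sum>i=1..m. y i * A i j / real m)"
          using arith_geom_mean[of "{1..m}" "\<lambda>i. y i * A i j"] m ypos Ann j by (auto simp: less_imp_le)
        also have "\<dots> = (\<Sum>i=1..m. y i * A i j) / real m" by (simp add: sum_divide_distrib)
        finally have "(\<Prod>i=1..m. y i * A i j) powr (1 / real m) \<le> (\<Sum>i=1..m. y i * A i j) / real m" .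
        then have "real m * (\<Prod>i=1..m. y i * A i j) powr (1 / real m) \<le> (\<Sum>i=1..m. y i * A i j)"
          using m by (simp add: field_simps)
        then show ?thesis using perj[OF j] by linarith
      qed
      define P where "P = (\<Prod>i=1..m. y i)"
      define Q where "Q j = (\<Prod>i=1..m. A i j)" for j
      have Ppos: "P > 0" unfolding P_def using ypos by (intro prod_pos) auto
      have Qnn: "Q j \<ge> 0" if "j\<in>{1..m}" for j unfolding Q_def using Ann that by (intro prod_nonneg) auto
      have split: "(\<Prod>i=1..m. y i * A i j) powr (1/real m) = P powr (1/real m) * Q j powr (1/real m)"
        if "j\<in>{1..m}" for j
        using Ppos Qnn[OF that] by (simp add: P_def Q_def prod.distrib powr_mult)
      have "(\<Prod>j=1..m. real m * (P powr (1/real m) * Q j powr (1/real m))) \<le> (\<Prod>j=1..m. x (\<sigma> j t))"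
        by (rule prod_mono) (use amgm split in auto)
      moreover have "(\<Prod>j=1..m. x (\<sigma> j t)) = P" unfolding P_def y_def by simp
      moreover have "(\<Prod>j=1..m. real m * (P powr (1/real m) * Q j powr (1/real m)))
          = real m ^ m * (P powr (1/real m)) ^ m * (\<Prod>j=1..m. Q j powr (1/real m))"
        by (simp add: prod.distrib)
      moreover have "(P powr (1/real m)) ^ m = P"
      proof -
        have "(P powr (1/real m)) ^ m = (P powr (1/real m)) powr (real m)"
          using Ppos by (simp add: powr_realpow)
        also have "\<dots> = P" using m Ppos by (simp add: powr_powr)
        finally show ?thesis .
      qed
      ultimately have "real m ^ m * P * (\<Prod>j=1..m. Q j powr (1/real m)) \<le> P" by simp
      then have "real m ^ m * (\<Prod>j=1..m. Q j powr (1/real m)) \<le> 1"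
        using Ppos by (simp add: mult.commute mult.left_commute)
      then have "(\<Prod>j=1..m. Q j powr (1/real m)) \<le> 1 / real m ^ m"
        using m by (simp add: field_simps)
      then show ?thesis unfolding Q_def A_def f_def .
    qed
    have "eventually (\<lambda>t. ereal (\<Prod>j=1..m. (\<Prod>i=1..m. integral {\<sigma> j t..t} (\<lambda>s. p i s * exp (oint (\<tau> i s) (\<sigma> i t) g))) powr (1 / real m)) \<le> ereal (1 / real m ^ m)) at_top"
      using main unfolding eventually_at_top_linorder by (intro exI[of _ T6]) auto
    then show ?thesis unfolding g_def by (rule Limsup_bounded)
  qed
  have "Limsup (at_right 0) (\<lambda>\<epsilon>::real.
        Limsup at_top (\<lambda>t. ereal
          (\<Prod>j=1..m. (\<Prod>i=1..m.
              integral {\<sigma> j t..t} (\<lambda>s. p i s *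
                exp (oint (\<tau> i s) (\<sigma> i t)
                       (\<lambda>\<xi>. \<Sum>k=1..m. (lam k - \<epsilon>) * p k \<xi>))))
            powr (1 / real m)))) \<le> ereal (1 / real m ^ m)"
    by (rule Limsup_bounded, rule eventually_mono[OF eventually_at_right_less]) (rule Gbound)
  then show False using cond by simp
qed



lemma main_ctx: "\<forall>T0 x. is_solution m p \<tau> t0 T0 x \<longrightarrow> oscillatory x"
proof (intro allI impI)
  fix T0 and x :: "real \<Rightarrow> real"
  assume sol: "is_solution m p \<tau> t0 T0 x"
  show "oscillatory x"
  proof (rule ccontr)
    assume "\<not> oscillatory x"
    then obtain T where T: "\<forall>t\<ge>T. x t \<noteq> 0" unfolding oscillatory_def by auto
    from sol obtain x' where T0: "t0 \<le> T0" and xc: "continuous_on {T0..} x"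
      and der: "\<forall>t\<in>{tau_inv m \<tau> t0 T0..}. (x has_real_derivative x' t) (at t within {tau_inv m \<tau> t0 T0..}) \<and> x' t + (\<Sum>i=1..m. p i t * x (\<tau> i t)) = 0"
      unfolding is_solution_def by blast
    define T1 where "T1 = max T T0"
    have sign: "(\<forall>t\<ge>T1. x t > 0) \<or> (\<forall>t\<ge>T1. x t < 0)"
    proof (rule ccontr)
      assume "\<not> ?thesis"
      then obtain a b where a: "a \<ge> T1" "x a \<le> 0" and b: "b \<ge> T1" "x b \<ge> 0"
        by (auto simp: not_less)
      have cab: "continuous_on {u..v} x" if "u \<ge> T1" for u v
        by (rule continuous_on_subset[OF xc]) (use that in \<open>auto simp: T1_def\<close>)
      have "\<exists>c. min a b \<le> c \<and> c \<le> max a b \<and> x c = 0"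
      proof (cases "a \<le> b")
        case True
        then show ?thesis using IVT'[of x a 0 b] a b cab[of a b] by auto
      next
        case False
        then show ?thesis using IVT2'[of x a 0 b] a b cab[of b a] by auto
      qed
      then obtain c where "c \<ge> min a b" "x c = 0" by auto
      then show False using T a b by (auto simp: T1_def)
    qed
    then show False
    proof
      assume "\<forall>t\<ge>T1. x t > 0"
      then show False by (rule core[OF der])
    next
      assume neg: "\<forall>t\<ge>T1. x t < 0"
      have der': "\<forall>t\<in>{tau_inv m \<tau> t0 T0..}. ((\<lambda>t. - x t) has_real_derivative - x' t) (at t within {tau_inv m \<tau> t0 T0..}) \<and> - x' t + (\<Sum>i=1..m. p i t * - x (\<tau> i t)) = 0"
      proof
        fix t assume t: "t \<in> {tau_inv m \<tau> t0 T0..}"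
        have "(\<Sum>i=1..m. p i t * - x (\<tau> i t)) = - (\<Sum>i=1..m. p i t * x (\<tau> i t))"
          by (simp add: sum_negf)
        show "((\<lambda>t. - x t) has_real_derivative - x' t) (at t within {tau_inv m \<tau> t0 T0..}) \<and> - x' t + (\<Sum>i=1..m. p i t * - x (\<tau> i t)) = 0"
        proof
          show "((\<lambda>t. - x t) has_real_derivative - x' t) (at t within {tau_inv m \<tau> t0 T0..})"
            using der t by (auto intro: DERIV_minus)
          have "x' t + (\<Sum>i=1..m. p i t * x (\<tau> i t)) = 0" using der t by auto
          then show "- x' t + (\<Sum>i=1..m. p i t * - x (\<tau> i t)) = 0"
            using \<open>(\<Sum>i=1..m. p i t * - x (\<tau> i t)) = - (\<Sum>i=1..m. p i t * x (\<tau> i t))\<close> by linarith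
        qed
      qed
      show False
        by (rule core[where x="\<lambda>t. - x t" and x'="\<lambda>t. - x' t", OF der']) (use neg in auto)
    qed
  qed
qed

end

theorem theorem3p2:
  fixes m :: nat and t0 :: real
    and p \<tau> \<sigma> :: "nat \<Rightarrow> real \<Rightarrow> real"
    and \<beta> lam :: "nat \<Rightarrow> real"
  assumes m: "m \<ge> 1"
    and p_cont: "\<forall>i\<in>{1..m}. continuous_on {t0..} (p i)"
    and p_nonneg: "\<forall>i\<in>{1..m}. \<forall>t\<ge>t0. p i t \<ge> 0"
    and tau_cont: "\<forall>i\<in>{1..m}. continuous_on {t0..} (\<tau> i)"
    and tau_nonneg: "\<forall>i\<in>{1..m}. \<forall>t\<ge>t0. \<tau> i t \<ge> 0"
    and tau_le: "\<forall>i\<in>{1..m}. \<forall>t\<ge>t0. \<tau> i t \<le> t"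
    and tau_lim: "\<forall>i\<in>{1..m}. filterlim (\<tau> i) at_top at_top"
    and beta: "\<forall>i\<in>{1..m}.
        Liminf at_top (\<lambda>t. ereal (integral {\<tau> i t..t} (p i))) = ereal (\<beta> i)
        \<and> 0 < \<beta> i \<and> \<beta> i \<le> 1 / exp 1"
    and lam_root: "\<forall>i\<in>{1..m}. exp (\<beta> i * lam i) = lam i"
    and lam_least: "\<forall>i\<in>{1..m}. \<forall>y. exp (\<beta> i * y) = y \<longrightarrow> lam i \<le> y"
    and sigma_cont: "\<forall>i\<in>{1..m}. continuous_on {t0..} (\<sigma> i)"
    and sigma_mono: "\<forall>i\<in>{1..m}. mono_on {t0..} (\<sigma> i)"
    and sigma_bounds: "\<forall>i\<in>{1..m}. \<forall>t\<ge>t0. \<tau> i t \<le> \<sigma> i t \<and> \<sigma> i t \<le> t"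
    and cond: "Limsup (at_right 0) (\<lambda>\<epsilon>::real.
        Limsup at_top (\<lambda>t. ereal
          (\<Prod>j=1..m. (\<Prod>i=1..m.
              integral {\<sigma> j t..t} (\<lambda>s. p i s *
                exp (oint (\<tau> i s) (\<sigma> i t)
                       (\<lambda>\<xi>. \<Sum>k=1..m. (lam k - \<epsilon>) * p k \<xi>))))
            powr (1 / real m))))
        > ereal (1 / real m ^ m)"
  shows "\<forall>T0 x. is_solution m p \<tau> t0 T0 x \<longrightarrow> oscillatory x"
    using main_ctx[OF assms] .

end
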